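(* For entitlements $e_1,\dots,e_n>0$ with $\sum_ie_i=1$ and any reported demands $d_1,\dots,d_n\ge0$, if $d_i<e_i$ then the MMF allocation to agent $i$ equals $d_i$.
   Context: MMF$(e,d)$: set $r=1$, $E=1$, $S=\{1,\dots,n\}$, $a=0$; process agents $j$ in ascending order of $d_j/e_j$; if $d_j<re_j/E$, set $a_j=d_j$, remove $j$ from $S$, $r\leftarrow r-d_j$, $E\leftarrow E-e_j$ and continue; otherwise set $a_k=re_k/E$ for all $k\in S$ and stop; output $a$. *)

theory Defs
  imports Main Complex_Main
begin

text \<open>The list holds the agents of S still to be
processed, in ascending order of d_j/e_j; r is the remaining resource, E the
remaining entitlement. Agents processed earlier keep their value d_j (set by the
outer update), agents never touched keep the initial value 0.\<close>
fun mmf_loop :: "(nat \<Rightarrow> real) \<Rightarrow> (nat \<Rightarrow> real) \<Rightarrow> real \<Rightarrow> real \<Rightarrow> nat list \<Rightarrow> (nat \<Rightarrow> real)" where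
  "mmf_loop e d r E [] = (\<lambda>k. 0)"
| "mmf_loop e d r E (j # js) =
     (if d j < r * e j / E
      then (mmf_loop e d (r - d j) (E - e j) js)(j := d j)
      else (\<lambda>k. if k \<in> set (j # js) then r * e k / E else 0))"

definition MMF :: "(nat \<Rightarrow> real) \<Rightarrow> (nat \<Rightarrow> real) \<Rightarrow> nat list \<Rightarrow> (nat \<Rightarrow> real)" where
  "MMF e d ord = mmf_loop e d 1 1 ord"

definition mmf_order :: "nat \<Rightarrow> (nat \<Rightarrow> real) \<Rightarrow> (nat \<Rightarrow> real) \<Rightarrow> nat list \<Rightarrow> bool" where
  "mmf_order n e d ord \<longleftrightarrow> distinct ord \<and> set ord = {..<n} \<and>
     sorted_wrt (\<lambda>i j. d i / e i \<le> d j / e j) ord"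

end

theory Submission
  imports Defs
begin

lemma loop_inv:
  assumes "distinct js" "i \<in> set js" "\<forall>k\<in>set js. e k > 0"
    "E = sum_list (map e js)" "r \<ge> E"
    "sorted_wrt (\<lambda>i j. d i / e i \<le> d j / e j) js" "d i < e i"
  shows "mmf_loop e d r E js i = d i"
  using assms
proof (induction js arbitrary: r E)
  case Nil
  then show ?case by simp
next
  case (Cons j js)
  have ej: "e j > 0" using Cons.prems by simp
  have nn: "sum_list (map e js) \<ge> 0"
    using Cons.prems(3) by (intro sum_list_nonneg) (auto intro: less_imp_le)
  have Epos: "E > 0" using Cons.prems(4) ej nn by simp
  have rE: "r / E \<ge> 1" using Cons.prems(5) Epos by simp
  show ?case
  proof (cases "d j < r * e j / E")
    case True
    show ?thesis
    proof (cases "i = j")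
      case True
      then show ?thesis using \<open>d j < r * e j / E\<close> by simp
    next
      case False
      have key: "d j * E < r * e j" using True Epos by (simp add: field_simps)
      have "r - d j \<ge> E - e j"
      proof (cases "E - e j > 0")
        case True
        have a: "(r - d j) * E \<ge> r * (E - e j)" using key by (simp add: algebra_simps)
        have b: "r * (E - e j) \<ge> E * (E - e j)" using Cons.prems(5) True
          by (simp add: mult_right_mono)
        have "(r - d j) * E \<ge> (E - e j) * E" using a b by (simp add: mult.commute)
        then show ?thesis using Epos by simp
      next
        case False
        have "E = e j" using False Cons.prems(4) nn by simp
        then have "d j < r" using \<open>d j < r * e j / E\<close> ej by simp
        then show ?thesis using False by simp
      qed
      have "mmf_loop e d (r - d j) (E - e j) js i = d i"
        apply (rule Cons.IH)
        using Cons.prems False \<open>r - d j \<ge> E - e j\<close> by auto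
      then show ?thesis using True False by simp
    qed
  next
    case False
    have "d j \<ge> r * e j / E" using False by simp
    moreover have "r * e j / E \<ge> e j" using rE ej
      by (metis mult.commute mult_le_cancel_left1 times_divide_eq_right less_imp_le not_le)
    ultimately have dj: "d j / e j \<ge> 1" using ej by simp
    have "d i / e i \<ge> 1"
    proof (cases "i = j")
      case True then show ?thesis using dj by simp
    next
      case False
      then have "d j / e j \<le> d i / e i" using Cons.prems(2,6) by auto
      then show ?thesis using dj by simp
    qed
    moreover have "e i > 0" using Cons.prems(2,3) by auto
    ultimately have "d i \<ge> e i" by (simp add: field_simps)
    then show ?thesis using Cons.prems(7) by simp
  qed
qed

theorem mainTheorem12:
  fixes n :: nat and e d :: "nat \<Rightarrow> real" and ord :: "nat list" and i :: nat
  assumes "\<forall>k<n. e k > 0"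
    and "(\<Sum>k<n. e k) = 1"
    and "\<forall>k<n. d k \<ge> 0"
    and "mmf_order n e d ord"
    and "i < n"
    and "d i < e i"
  shows "MMF e d ord i = d i"
proof -
  have o: "distinct ord" "set ord = {..<n}" "sorted_wrt (\<lambda>i j. d i / e i \<le> d j / e j) ord"
    using assms(4) unfolding mmf_order_def by auto
  have "sum_list (map e ord) = sum e (set ord)" using o(1) by (simp add: sum_list_distinct_conv_sum_set)
  then have s: "1 = sum_list (map e ord)" using o(2) assms(2) by simp
  show ?thesis unfolding MMF_def
    by (rule loop_inv[OF o(1) _ _ s _ o(3) assms(6)]) (use o(2) assms(1,5) in auto)
qed

end
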